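(* Let $\Gamma$ be a round sphere of diameter $D$ in some Euclidean space $\mathbb{R}^n$, and let $B$ be the closed ball bounded by $\Gamma$. Let $\Pi$ be a hyperplane that intersects $B$ but does not contain the center of $B$. Let $\gamma=\Pi\cap B$, let $d$ be the diameter of $\gamma$, and let $\gamma^*$ be the smaller of the two spherical caps of $\Gamma$ bounded by $\Pi\cap\Gamma$. Let $p^*\in\gamma^*$, and let $p\in\gamma$ be the point such that the line through $p$ and $p^*$ contains the center of $B$. Then $\|p-p^*\|\le\chi(D,d)$, where $\chi(D,d)=\frac{d^2}{4D}+\frac{d^4}{2D^3}$. *)

theory Defs
  imports "HOL-Analysis.Analysis"
begin

definition chi :: "real \<Rightarrow> real \<Rightarrow> real" where
  "chi D d = d^2 / (4 * D) + d^4 / (2 * D^3)"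

end

theory Submission
  imports Defs
begin

lemma A: fixes R h :: real assumes "R > 0" "0 \<le> h" "h \<le> R"
  shows "R^2 \<le> 2*(R+h)^2"
proof -
  have "R^2 \<le> (R+h)^2" using assms by (intro power_mono) auto
  moreover have "(R+h)^2 \<ge> 0" by simp
  ultimately show ?thesis by linarith
qed
lemma B: fixes R h :: real assumes "R > 0" "0 \<le> h" "h \<le> R"
 shows "2*R^3*(R-h) - (R^2*(R^2-h^2) + 2*(R^2-h^2)^2) = (R - h)^2 * R^2 - (R-h)^2 * (2*(R+h)^2)"
    by (simp add: power2_eq_square power3_eq_cube algebra_simps)
lemma C: fixes R h :: real assumes "R > 0" "2*R^3*(R-h) \<le> R^2*(R^2-h^2) + 2*(R^2-h^2)^2"
  shows "R - h \<le> (R^2 - h^2) / (2*R) + (R^2-h^2)^2 / R^3"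
proof -
  have "(R^2 - h^2) / (2*R) + (R^2-h^2)^2 / R^3 = (R^2*(R^2-h^2) + 2*(R^2-h^2)^2) / (2*R^3)"
    using assms by (simp add: field_simps power3_eq_cube power2_eq_square)
  moreover have "R - h \<le> (R^2*(R^2-h^2) + 2*(R^2-h^2)^2) / (2*R^3)"
    using assms by (subst pos_le_divide_eq) (auto simp: mult.commute)
  ultimately show ?thesis by simp
qed
lemma final_ineq:
  fixes R h :: real
  assumes "R > 0" "0 \<le> h" "h \<le> R"
  shows "R - h \<le> (R^2 - h^2) / (2*R) + (R^2-h^2)^2 / R^3"
proof -
  have "(R - h)^2 * R^2 \<le> (R-h)^2 * (2*(R+h)^2)" using A[OF assms] by (intro mult_left_mono) auto
  hence "2*R^3*(R-h) \<le> R^2*(R^2-h^2) + 2*(R^2-h^2)^2" using B[OF assms] by linarith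
  thus ?thesis using C assms by blast
qed

theorem lemma3p4:
  fixes c u p pstar :: "'a::euclidean_space" and D t :: real
  assumes dim: "DIM('a) \<ge> 2"
    and D: "D > 0"
    and u: "u \<noteq> 0"
    and meets: "{x. u \<bullet> x = t} \<inter> cball c (D/2) \<noteq> {}"
    and nocenter: "u \<bullet> c \<noteq> t"
    and pstar: "pstar \<in> {x \<in> sphere c (D/2). (u \<bullet> x - t) * (u \<bullet> c - t) \<le> 0}"
    and p: "p \<in> {x. u \<bullet> x = t} \<inter> cball c (D/2)"
    and col: "\<exists>s::real. p = c + s *\<^sub>R (pstar - c)"
  shows "dist p pstar \<le> chi D (diameter ({x. u \<bullet> x = t} \<inter> cball c (D/2)))"
proof -
  define R where "R = D/2"
  define k where "k = norm u"
  define a where "a = u \<bullet> c - t"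
  define w where "w = pstar - c"
  define al where "al = u \<bullet> w"
  define S where "S = {x. u \<bullet> x = t} \<inter> cball c (D/2)"
  have R: "R > 0" using D R_def by simp
  have k: "k > 0" using u k_def by simp
  have a0: "a \<noteq> 0" using nocenter a_def by simp
  have nw: "norm w = R" using pstar unfolding w_def R_def by (simp add: dist_norm norm_minus_commute)
  from meets obtain x where "x \<in> {x. u \<bullet> x = t} \<inter> cball c (D/2)" by blast
  hence x: "u \<bullet> x = t" "dist c x \<le> R" unfolding R_def by auto
  have "a = u \<bullet> (c - x)" using x a_def by (simp add: inner_diff_right)
  hence "\<bar>a\<bar> \<le> k * norm (c - x)" using Cauchy_Schwarz_ineq2[of u "c-x"] k_def by simp
  also have "\<dots> \<le> k * R" using x k by (intro mult_left_mono) (auto simp: dist_norm)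
  finally have akR: "\<bar>a\<bar> \<le> k * R" .
  have sgn: "(al + a) * a \<le> 0" using pstar unfolding al_def a_def w_def
    by (simp add: inner_diff_right algebra_simps)
  obtain s where s: "p = c + s *\<^sub>R w" using col w_def by auto
  have "u \<bullet> p = t" using p by simp
  hence sa: "s * al = - a" using s unfolding al_def a_def by (simp add: inner_add_right)
  have alR: "\<bar>al\<bar> \<le> k * R" using Cauchy_Schwarz_ineq2[of u w] k_def nw al_def by simp
  have dpp: "dist p pstar = \<bar>s - 1\<bar> * R"
  proof -
    have "p - pstar = (s - 1) *\<^sub>R w" proof -
      have "pstar = c + w" using w_def by simp
      thus ?thesis using s by (simp add: algebra_simps)
    qed
    thus ?thesis using nw by (simp add: dist_norm)
  qed
  have aa: "al * a \<le> -(a^2)" using sgn by (simp add: algebra_simps power2_eq_square)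
  have apos: "a^2 > 0" using a0 by simp
  have neg: "- (al * a) > 0" using aa apos by linarith
  have al0: "al \<noteq> 0" using neg by auto
  have "s = -a / al" using sa al0 by (metis nonzero_mult_div_cancel_right)
  also have "\<dots> = (-a * a) / (al * a)" using a0 by simp
  also have "\<dots> = a^2 / (- (al * a))" by (simp add: power2_eq_square)
  finally have sdef: "s = a^2 / (- (al * a))" .
  have "a^2 / (- (al * a)) \<le> 1" using neg aa by (subst pos_divide_le_eq) auto
  hence s1: "s \<le> 1" using sdef by simp
  have "- (al * a) \<le> k * R * \<bar>a\<bar>"
  proof -
    have "- (al * a) \<le> \<bar>al\<bar> * \<bar>a\<bar>" by (simp add: abs_mult[symmetric])
    also have "\<dots> \<le> k * R * \<bar>a\<bar>" using alR by (intro mult_right_mono) auto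
    finally show ?thesis .
  qed
  hence "a^2 / (k * R * \<bar>a\<bar>) \<le> s" unfolding sdef
  proof (rule divide_left_mono)
    have kRa: "k*R*\<bar>a\<bar> > 0" using k R a0 by simp
    show "0 < k * R * \<bar>a\<bar> * - (al * a)" using mult_pos_pos[OF kRa neg] .
  qed simp
  moreover have "a^2 / (k * R * \<bar>a\<bar>) = \<bar>a\<bar> / (k * R)"
  proof -
    have e: "a^2 = \<bar>a\<bar> * \<bar>a\<bar>" by (simp add: power2_eq_square)
    have "\<bar>a\<bar> * \<bar>a\<bar> / (k * R * \<bar>a\<bar>) = \<bar>a\<bar> / (k * R)"
      using a0 by (metis mult.commute mult_divide_mult_cancel_left_if abs_eq_0)
    thus ?thesis using e by simp
  qed
  ultimately have slow: "\<bar>a\<bar> / (k*R) \<le> s" by simp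
  define h where "h = \<bar>a\<bar> / k"
  have h0: "0 \<le> h" and hR: "h \<le> R" using akR k unfolding h_def by (auto simp: field_simps)
  have "\<bar>s - 1\<bar> * R = (1 - s) * R" using s1 by simp
  also have "\<dots> \<le> (1 - \<bar>a\<bar> / (k*R)) * R" using slow R by (intro mult_right_mono) auto
  also have "\<dots> = R - h" using R k unfolding h_def by (simp add: field_simps)
  finally have dle: "dist p pstar \<le> R - h" using dpp by simp
  obtain v0 where v0: "v0 \<noteq> 0" "orthogonal u v0" using orthogonal_to_vector_exists[OF dim] by blast
  define v where "v = v0 /\<^sub>R norm v0"
  have nv: "norm v = 1" using v0 v_def by simp
  have uv: "u \<bullet> v = 0" using v0 v_def by (simp add: orthogonal_def)
  define r where "r = sqrt (R^2 - h^2)"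
  have r0: "r \<ge> 0" using h0 hR r_def by (simp add: abs_le_square_iff power_mono)
  have r2: "r^2 = R^2 - h^2" unfolding r_def using h0 hR by (simp add: power_mono)
  define q0 where "q0 = c - (a / k^2) *\<^sub>R u"
  have uq0: "u \<bullet> q0 = t" unfolding q0_def a_def using k k_def
    by (simp add: inner_diff_right power2_norm_eq_inner[symmetric])
  have inS: "q0 + e *\<^sub>R v \<in> S" if e: "e = r \<or> e = -r" for e
  proof -
    have "u \<bullet> (q0 + e *\<^sub>R v) = t" using uq0 uv by (simp add: inner_add_right)
    moreover have "norm (q0 + e *\<^sub>R v - c)^2 = h^2 + r^2"
    proof -
      have eq: "q0 + e *\<^sub>R v - c = e *\<^sub>R v - (a/k^2) *\<^sub>R u" unfolding q0_def by simp
      have "norm (e *\<^sub>R v - (a/k^2) *\<^sub>R u)^2 = e^2 * (v \<bullet> v) + (a/k^2)^2 * (u \<bullet> u)"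
        unfolding power2_norm_eq_inner using uv
        by (simp add: inner_diff_left inner_diff_right inner_commute power2_eq_square)
      also have "\<dots> = e^2 + a^2/k^2" 
      proof -
        have vv: "v \<bullet> v = 1" using nv by (simp add: norm_eq_1)
        have uu: "u \<bullet> u = k^2" by (simp add: k_def power2_norm_eq_inner)
        have "(a/k^2)^2 * k^2 = a^2/k^2" using k by (simp add: power2_eq_square field_simps)
        thus ?thesis unfolding vv uu by simp
      qed
      also have "\<dots> = h^2 + r^2" using e unfolding h_def by (auto simp: power_divide)
      finally show ?thesis by (simp only: eq)
    qed
    hence "norm (q0 + e *\<^sub>R v - c)^2 = R^2" using r2 by simp
    hence "norm (q0 + e *\<^sub>R v - c) = R" using R
      by (subst (asm) power2_eq_iff_nonneg) auto
    hence "dist c (q0 + e *\<^sub>R v) \<le> D/2" using R_def by (simp add: dist_norm norm_minus_commute)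
    ultimately show ?thesis unfolding S_def by simp
  qed
  have bS: "bounded S" unfolding S_def by (meson bounded_Int bounded_cball)
  have rr: "r *\<^sub>R v + r *\<^sub>R v = (2*r) *\<^sub>R v" by (simp only: mult_2 scaleR_left_distrib)
  have "(q0 + r *\<^sub>R v) - (q0 + (-r) *\<^sub>R v) = r *\<^sub>R v + r *\<^sub>R v" by simp
  hence "(q0 + r *\<^sub>R v) - (q0 + (-r) *\<^sub>R v) = (2*r) *\<^sub>R v" using rr by simp
  hence "dist (q0 + r *\<^sub>R v) (q0 + (-r) *\<^sub>R v) = 2 * r" using nv r0
    by (simp add: dist_norm)
  moreover have "dist (q0 + r *\<^sub>R v) (q0 + (-r) *\<^sub>R v) \<le> diameter S"
    by (rule diameter_bounded_bound[OF bS inS[of r] inS[of "-r"]]) auto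
  ultimately have dS: "2 * r \<le> diameter S" by simp
  have "chi D (2*r) \<le> chi D (diameter S)"
  proof -
    have "(2*r)^2 \<le> (diameter S)^2" using dS r0 by (intro power_mono) auto
    moreover have "(2*r)^4 \<le> (diameter S)^4" using dS r0 by (intro power_mono) auto
    ultimately show ?thesis unfolding chi_def using D
      by (intro add_mono divide_right_mono) auto
  qed
  moreover have "chi D (2*r) = (R^2 - h^2) / (2*R) + (R^2-h^2)^2 / R^3"
  proof -
    have e2: "(2*r)^2 = 4*(R^2-h^2)" using r2 by (simp add: power_mult_distrib)
    have "(2*r)^4 = ((2*r)^2)^2" by simp
    hence e4: "(2*r)^4 = 16*(R^2-h^2)^2" unfolding e2 by (simp only: power_mult_distrib) simp
    have DD: "D = 2*R" using R_def by simp
    show ?thesis unfolding chi_def e2 e4 DD using R by (simp add: power_mult_distrib field_simps)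
  qed
  ultimately show ?thesis using dle final_ineq[OF R h0 hR] S_def by simp
qed

end
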